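(* Let $G$ be the final graph of the uncoordinated construction (described in the context) on a set $P\subset\mathbb{R}^d$ of $n$ points with parameter $s>1$, let $\alpha$ be the aspect ratio of $P$, and let $\mathcal{W}=\{(P_i,Q_i)\}_{i=1}^m$ be the corresponding greedy WSPD, i.e. one pair $(B_r(p),B_r(q))$ with $r=|pq|/(2s+2)$ for each edge $pq$ of $G$. Then $\sum_{i=1}^m(|P_i|+|Q_i|)=O(n s^d\lg\alpha)$, where the implied constant depends only on $d$. Consequently the total number of messages in the distributed construction (described in the context) is $O(n s^d\lg\alpha)$.
   Context: Fix $d\ge 1$; $|xy|$ is Euclidean distance; $\lg$ is logarithm base 2; $B_r(p)=\{x\in P:|px|\le r\}$. The aspect ratio is $\alpha=\max_{u,v\in P}|uv|/\min_{u\ne v\in P}|uv|$. Uncoordinated construction: start with the graph $G$ on vertex set $P$ with no edges. Every ordered pair $(p,q)$ of distinct points of $P$ is processed exactly once, in an arbitrary order, one at a time. When $(p,q)$ is processed, the edge $pq$ is added to $G$ unless $G$ currently contains an edge whose endpoints can be labeled $p',q'$ with $|pp'|\le |p'q'|/(2s+2)$ and $|qq'|\le |p'q'|/(2s+2)$. $G$ is the graph after all pairs are processed. Distributed message model: whenever an edge $pq$ is built, one message is sent to each node of $B_r(p)$ and one to each node of $B_r(q)$, with $r=|pq|/(2s+2)$, informing it of the edge; so building $pq$ costs $|B_r(p)|+|B_r(q)|$ messages, and no other messages are counted. *)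

theory Defs
  imports "HOL-Analysis.Analysis"
begin

definition ballP :: "'a::metric_space set \<Rightarrow> 'a \<Rightarrow> real \<Rightarrow> 'a set" where
  "ballP P p r = {x \<in> P. dist p x \<le> r}"

definition rad :: "real \<Rightarrow> 'a::metric_space \<Rightarrow> 'a \<Rightarrow> real" where
  "rad s p q = dist p q / (2 * s + 2)"

definition covers :: "real \<Rightarrow> 'a::metric_space \<times> 'a \<Rightarrow> 'a \<times> 'a \<Rightarrow> bool" where
  "covers s e pq = (dist (fst pq) (fst e) \<le> rad s (fst e) (snd e) \<and>
                    dist (snd pq) (snd e) \<le> rad s (fst e) (snd e))"

definition blocked :: "real \<Rightarrow> ('a::metric_space \<times> 'a) set \<Rightarrow> 'a \<times> 'a \<Rightarrow> bool" where
  "blocked s E pq = (\<exists>e\<in>E. covers s e pq \<or> covers s (snd e, fst e) pq)"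

definition edge_cost :: "'a::metric_space set \<Rightarrow> real \<Rightarrow> 'a \<times> 'a \<Rightarrow> nat" where
  "edge_cost P s e = card (ballP P (fst e) (rad s (fst e) (snd e)))
                   + card (ballP P (snd e) (rad s (fst e) (snd e)))"

(* processing one ordered pair; state = (edges built so far, messages sent so far).
   Edges are stored as the ordered pair (p,q) that was processed when built. *)
definition uc_step :: "'a::metric_space set \<Rightarrow> real \<Rightarrow> ('a \<times> 'a) set \<times> nat \<Rightarrow> 'a \<times> 'a
                      \<Rightarrow> ('a \<times> 'a) set \<times> nat" where
  "uc_step P s st pq = (if blocked s (fst st) pq then st
                        else (insert pq (fst st), snd st + edge_cost P s pq))"

definition uc_run :: "'a::metric_space set \<Rightarrow> real \<Rightarrow> ('a \<times> 'a) list \<Rightarrow> ('a \<times> 'a) set \<times> nat" where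
  "uc_run P s L = foldl (uc_step P s) ({}, 0) L"

definition uc_edges :: "'a::metric_space set \<Rightarrow> real \<Rightarrow> ('a \<times> 'a) list \<Rightarrow> ('a \<times> 'a) set" where
  "uc_edges P s L = fst (uc_run P s L)"

definition uc_messages :: "'a::metric_space set \<Rightarrow> real \<Rightarrow> ('a \<times> 'a) list \<Rightarrow> nat" where
  "uc_messages P s L = snd (uc_run P s L)"

(* greedy WSPD: one pair (B_r(p), B_r(q)) per edge pq; sum of |P_i|+|Q_i| *)
definition wspd_size :: "'a::metric_space set \<Rightarrow> real \<Rightarrow> ('a \<times> 'a) set \<Rightarrow> nat" where
  "wspd_size P s E = (\<Sum>e\<in>E. card (ballP P (fst e) (rad s (fst e) (snd e)))
                             + card (ballP P (snd e) (rad s (fst e) (snd e))))"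

definition aspect_ratio :: "'a::metric_space set \<Rightarrow> real" where
  "aspect_ratio P = Max {dist u v | u v. u \<in> P \<and> v \<in> P} /
                    Min {dist u v | u v. u \<in> P \<and> v \<in> P \<and> u \<noteq> v}"

end

theory Submission
  imports Defs "HOL-Library.FuncSet"
begin


definition inv_st :: "'a::metric_space set \<Rightarrow> real \<Rightarrow> ('a \<times> 'a) set \<Rightarrow> ('a \<times> 'a) set \<times> nat \<Rightarrow> bool" where
  "inv_st P s A st = (finite (fst st) \<and> snd st = (\<Sum>e\<in>fst st. edge_cost P s e) \<and> fst st \<subseteq> A \<and>
     (\<forall>e1\<in>fst st. \<forall>e2\<in>fst st. e1 \<noteq> e2 \<longrightarrow> \<not> (covers s e1 e2 \<and> covers s e2 e1)))"

lemma covers_self: "s > 1 \<Longrightarrow> covers s e e"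
  unfolding covers_def rad_def by (simp add: divide_nonneg_pos)

lemma step_inv:
  assumes "s > 1" "inv_st P s A st" "pq \<in> A"
  shows "inv_st P s A (uc_step P s st pq)"
proof (cases "blocked s (fst st) pq")
  case True then show ?thesis using assms by (simp add: uc_step_def)
next
  case False
  have nc: "\<forall>e\<in>fst st. \<not> covers s e pq" using False unfolding blocked_def by blast
  have notin: "pq \<notin> fst st" using nc covers_self[OF assms(1)] by blast
  show ?thesis using False assms(2,3) nc notin unfolding inv_st_def uc_step_def
    by auto
qed

lemma foldl_inv:
  assumes "s > 1" "inv_st P s A st" "set L \<subseteq> A"
  shows "inv_st P s A (foldl (uc_step P s) st L)"
  using assms(2,3)
proof (induction L arbitrary: st)
  case Nil then show ?case by simp
next
  case (Cons a L)
  then show ?case using step_inv[OF assms(1), of P A st a] by simp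
qed

lemma run_inv:
  assumes "s > 1"
  shows "inv_st P s (set L) (uc_run P s L)"
  unfolding uc_run_def
  by (rule foldl_inv[OF assms]) (auto simp: inv_st_def)

lemma messages_eq: "s > 1 \<Longrightarrow> uc_messages P s L = wspd_size P s (uc_edges P s L)"
  using run_inv[of s P L] unfolding uc_messages_def uc_edges_def wspd_size_def inv_st_def edge_cost_def
  by simp

lemma cell_close:
  fixes y z :: "'a::euclidean_space" and h :: real
  assumes h: "h > 0" and eq: "\<forall>b\<in>Basis. \<lfloor>(y \<bullet> b) / h\<rfloor> = \<lfloor>(z \<bullet> b) / h\<rfloor>"
  shows "dist y z < DIM('a) * h"
proof -
  have each: "\<bar>(y - z) \<bullet> b\<bar> < h" if b: "b \<in> Basis" for b
  proof -
    have f: "\<lfloor>(y \<bullet> b) / h\<rfloor> = \<lfloor>(z \<bullet> b) / h\<rfloor>" using eq b by blast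
    have "\<bar>(y \<bullet> b) / h - (z \<bullet> b) / h\<bar> < 1"
      using f by linarith
    then have "\<bar>(y \<bullet> b) - (z \<bullet> b)\<bar> / h < 1" using h by (simp add: diff_divide_distrib[symmetric] abs_divide)
    then show ?thesis using h by (simp add: inner_diff_left divide_less_eq)
  qed
  have "dist y z = norm (y - z)" by (simp add: dist_norm)
  also have "\<dots> \<le> (\<Sum>b\<in>Basis. \<bar>(y - z) \<bullet> b\<bar>)" by (rule norm_le_l1)
  also have "\<dots> < (\<Sum>b\<in>(Basis::'a set). h)"
    by (rule sum_strict_mono) (auto simp: each)
  also have "\<dots> = DIM('a) * h" by simp
  finally show ?thesis .
qed

lemma coord_range:
  fixes y x :: "'a::euclidean_space"
  assumes h: "h > 0" and b: "b \<in> Basis" and d: "dist y x \<le> R"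
  shows "\<lfloor>(y \<bullet> b) / h\<rfloor> \<in> {\<lfloor>(x \<bullet> b - R) / h\<rfloor> .. \<lfloor>(x \<bullet> b + R) / h\<rfloor>}"
proof -
  have "\<bar>(y - x) \<bullet> b\<bar> \<le> R" using Basis_le_norm[OF b, of "y - x"] d by (simp add: dist_norm)
  then have "x \<bullet> b - R \<le> y \<bullet> b" "y \<bullet> b \<le> x \<bullet> b + R" by (auto simp: inner_diff_left)
  then have "(x \<bullet> b - R)/h \<le> (y \<bullet> b)/h" "(y \<bullet> b)/h \<le> (x \<bullet> b + R)/h"
    using h by (auto intro: divide_right_mono)
  then show ?thesis by (auto intro: floor_mono)
qed

lemma int_range_card:
  assumes h: "h > 0" "R \<ge> 0"
  shows "real (card {\<lfloor>(a - R) / h\<rfloor> .. \<lfloor>(a + R) / h\<rfloor>}) \<le> 2 * R / h + 2"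
proof -
  have le: "(a - R)/h \<le> (a + R)/h" using h by (auto intro: divide_right_mono)
  have "\<lfloor>(a - R) / h\<rfloor> \<le> \<lfloor>(a + R) / h\<rfloor>" using le by (rule floor_mono)
  then have "real (card {\<lfloor>(a - R) / h\<rfloor> .. \<lfloor>(a + R) / h\<rfloor>}) = of_int (\<lfloor>(a + R) / h\<rfloor> - \<lfloor>(a - R) / h\<rfloor> + 1)"
    by simp
  also have "\<dots> \<le> (a + R)/h - ((a - R)/h - 1) + 1"
    using of_int_floor_le[of "(a+R)/h"] real_of_int_floor_gt_diff_one[of "(a-R)/h"] by linarith
  also have "\<dots> = 2 * R / h + 2" using h by (simp add: field_simps)
  finally show ?thesis .
qed

lemma grid_count:
  fixes S :: "('a::euclidean_space \<times> 'a) set" and x :: 'a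
  assumes fin: "finite S" and dpos: "\<delta> > 0" and A0: "A \<ge> 0" and B0: "B \<ge> 0"
  and sep: "\<And>e1 e2. e1 \<in> S \<Longrightarrow> e2 \<in> S \<Longrightarrow> dist (fst e1) (fst e2) < \<delta> \<Longrightarrow> dist (snd e1) (snd e2) < \<delta> \<Longrightarrow> e1 = e2"
  and near: "\<And>e. e \<in> S \<Longrightarrow> dist (fst e) x \<le> A * \<delta> \<and> dist (snd e) x \<le> B * \<delta>"
  shows "real (card S) \<le> ((2 * A * DIM('a) + 2) * (2 * B * DIM('a) + 2)) ^ DIM('a)"
proof -
  define d where "d = real DIM('a)"
  have dpos': "d > 0" unfolding d_def by simp
  define h where "h = \<delta> / d"
  have h: "h > 0" unfolding h_def using dpos dpos' by simp
  define c where "c = (\<lambda>(y::'a). restrict (\<lambda>b. \<lfloor>(y \<bullet> b) / h\<rfloor>) Basis)"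
  define f where "f = (\<lambda>e::'a\<times>'a. (c (fst e), c (snd e)))"
  define I1 where "I1 = (\<lambda>b. {\<lfloor>(x \<bullet> b - A*\<delta>) / h\<rfloor> .. \<lfloor>(x \<bullet> b + A*\<delta>) / h\<rfloor>})"
  define I2 where "I2 = (\<lambda>b. {\<lfloor>(x \<bullet> b - B*\<delta>) / h\<rfloor> .. \<lfloor>(x \<bullet> b + B*\<delta>) / h\<rfloor>})"
  have close: "dist y z < \<delta>" if "c y = c z" for y z
  proof -
    have "\<forall>b\<in>Basis. \<lfloor>(y \<bullet> b) / h\<rfloor> = \<lfloor>(z \<bullet> b) / h\<rfloor>"
      using that unfolding c_def by (metis restrict_apply')
    from cell_close[OF h this] show ?thesis unfolding h_def d_def using dpos' d_def by simp
  qed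
  have inj: "inj_on f S"
  proof (rule inj_onI)
    fix e1 e2 assume "e1 \<in> S" "e2 \<in> S" "f e1 = f e2"
    then show "e1 = e2" using sep close unfolding f_def by auto
  qed
  have sub: "f ` S \<subseteq> (PiE Basis I1) \<times> (PiE Basis I2)"
  proof
    fix z assume "z \<in> f ` S"
    then obtain e where e: "e \<in> S" "z = f e" by blast
    have n1: "dist (fst e) x \<le> A*\<delta>" and n2: "dist (snd e) x \<le> B*\<delta>" using near[OF e(1)] by auto
    have "c (fst e) \<in> PiE Basis I1" unfolding c_def I1_def
      using coord_range[OF h _ n1] by (auto simp: PiE_iff)
    moreover have "c (snd e) \<in> PiE Basis I2" unfolding c_def I2_def
      using coord_range[OF h _ n2] by (auto simp: PiE_iff)
    ultimately show "z \<in> (PiE Basis I1) \<times> (PiE Basis I2)" using e unfolding f_def by auto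
  qed
  have fin2: "finite ((PiE Basis I1) \<times> (PiE Basis I2))"
    unfolding I1_def I2_def by (intro finite_cartesian_product finite_PiE) auto
  have "card S = card (f ` S)" using card_image[OF inj] by simp
  also have "\<dots> \<le> card ((PiE Basis I1) \<times> (PiE Basis I2))" by (rule card_mono[OF fin2 sub])
  also have "\<dots> = (\<Prod>b\<in>Basis. card (I1 b)) * (\<Prod>b\<in>Basis. card (I2 b))"
    by (simp add: card_cartesian_product card_PiE)
  finally have cS: "real (card S) \<le> (\<Prod>b\<in>Basis. real (card (I1 b))) * (\<Prod>b\<in>Basis. real (card (I2 b)))"
    by (metis of_nat_le_iff of_nat_mult of_nat_prod)
  have hA: "2 * (A*\<delta>) / h + 2 = 2 * A * d + 2" unfolding h_def using dpos dpos' by (simp add: field_simps)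
  have hB: "2 * (B*\<delta>) / h + 2 = 2 * B * d + 2" unfolding h_def using dpos dpos' by (simp add: field_simps)
  have p1: "(\<Prod>b\<in>Basis. real (card (I1 b))) \<le> (\<Prod>b\<in>(Basis::'a set). 2 * A * d + 2)"
    apply (rule prod_mono) using int_range_card[OF h, of "A*\<delta>"] hA A0 dpos unfolding I1_def by auto
  have p2: "(\<Prod>b\<in>Basis. real (card (I2 b))) \<le> (\<Prod>b\<in>(Basis::'a set). 2 * B * d + 2)"
    apply (rule prod_mono) using int_range_card[OF h, of "B*\<delta>"] hB B0 dpos unfolding I2_def by auto
  have "real (card S) \<le> (\<Prod>b\<in>(Basis::'a set). 2 * A * d + 2) * (\<Prod>b\<in>(Basis::'a set). 2 * B * d + 2)"
    using cS p1 p2 by (meson mult_mono order_trans prod_nonneg of_nat_0_le_iff zero_le_mult_iff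
        A0 B0 dpos' less_imp_le add_nonneg_nonneg zero_le_numeral)
  also have "\<dots> = ((2 * A * d + 2) * (2 * B * d + 2)) ^ DIM('a)"
    by (simp add: power_mult_distrib)
  finally show ?thesis unfolding d_def .
qed



lemma scale_props:
  fixes y :: real
  assumes "y \<ge> 1"
  shows "2 ^ (nat \<lfloor>log 2 y\<rfloor>) \<le> y \<and> y < 2 ^ (nat \<lfloor>log 2 y\<rfloor> + 1)"
proof -
  have y0: "y > 0" using assms by simp
  have l0: "log 2 y \<ge> 0" using assms by simp
  have k: "real (nat \<lfloor>log 2 y\<rfloor>) = of_int \<lfloor>log 2 y\<rfloor>" using l0 by simp
  have a: "real (nat \<lfloor>log 2 y\<rfloor>) \<le> log 2 y" using k by simp
  have b: "log 2 y < real (nat \<lfloor>log 2 y\<rfloor> + 1)" using k by linarith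
  have "2 powr real (nat \<lfloor>log 2 y\<rfloor>) \<le> y" using a le_log_iff[of 2 y] y0 by simp
  moreover have "y < 2 powr real (nat \<lfloor>log 2 y\<rfloor> + 1)" using b log_less_iff[of 2 y] y0 by simp
  ultimately show ?thesis by (metis powr_realpow zero_less_numeral)
qed

lemma card_filter_sum:
  assumes "finite P"
  shows "card {x\<in>P. Q x} = (\<Sum>x\<in>P. if Q x then 1 else (0::nat))"
proof -
  have "card {x\<in>P. Q x} = (\<Sum>x\<in>{x\<in>P. Q x}. 1)" by (rule card_eq_sum)
  also have "\<dots> = (\<Sum>x\<in>P. if Q x then 1 else 0)" by (rule sum.inter_filter[OF assms])
  finally show ?thesis .
qed

lemma count_swap:
  assumes "finite E" "finite P"
  shows "(\<Sum>e\<in>E. card {x\<in>P. Q e x}) = (\<Sum>x\<in>P. card {e\<in>E. Q e x})"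
proof -
  have "(\<Sum>e\<in>E. card {x\<in>P. Q e x}) = (\<Sum>e\<in>E. \<Sum>x\<in>P. if Q e x then 1 else 0)"
    by (intro sum.cong refl card_filter_sum assms)
  also have "\<dots> = (\<Sum>x\<in>P. \<Sum>e\<in>E. if Q e x then 1 else 0)" by (rule sum.swap)
  also have "\<dots> = (\<Sum>x\<in>P. card {e\<in>E. Q e x})"
    by (intro sum.cong refl card_filter_sum[symmetric] assms)
  finally show ?thesis .
qed

lemma const_bound:
  fixes t d :: real
  assumes "t > 1" "d \<ge> 1"
  shows "(4*d+2) * (2*(4*t+6)*d+2) \<le> ((4*d+2)*(22*d)) * t"
proof -
  have a: "0 \<le> (t - 1) * d" using assms by simp
  have a2: "(t - 1) * d = t*d - d" by (simp add: algebra_simps)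
  have b: "0 \<le> t*d - 1" using a a2 assms by linarith
  have e: "22*d*t - (2*(4*t+6)*d+2) = 12*((t - 1)*d) + 2*(t*d - 1)" by (simp add: algebra_simps)
  have z: "0 \<le> 22*d*t - (2*(4*t+6)*d+2)" unfolding e using a b assms by (intro add_nonneg_nonneg mult_nonneg_nonneg) auto
  have "2*(4*t+6)*d+2 \<le> 22*d*t" using z by linarith
  moreover have "0 \<le> 4*d+2" using assms by simp
  ultimately have "(4*d+2) * (2*(4*t+6)*d+2) \<le> (4*d+2) * (22*d*t)" by (rule mult_left_mono)
  then show ?thesis by (simp add: mult.assoc)
qed

lemma main_bound:
  fixes P :: "'a::euclidean_space set"
  assumes finP: "finite P" and c2: "card P \<ge> 2" and s1: "s > 1"
    and setL: "set L = {(p, q). p \<in> P \<and> q \<in> P \<and> p \<noteq> q}"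
  shows "real (wspd_size P s (uc_edges P s L)) \<le>
     4 * ((4 * real DIM('a) + 2) * (22 * real DIM('a))) ^ DIM('a) * real (card P) * s ^ DIM('a)
       * max 1 (log 2 (aspect_ratio P))"
proof -
  define E where "E = uc_edges P s L"
  have inv: "inv_st P s (set L) (uc_run P s L)" by (rule run_inv[OF s1])
  have finE: "finite E" and EL: "E \<subseteq> set L"
    and mut: "\<And>e1 e2. e1 \<in> E \<Longrightarrow> e2 \<in> E \<Longrightarrow> e1 \<noteq> e2 \<Longrightarrow> \<not> (covers s e1 e2 \<and> covers s e2 e1)"
    using inv unfolding inv_st_def E_def uc_edges_def by auto
  have EP: "fst e \<in> P" "snd e \<in> P" "fst e \<noteq> snd e" if "e \<in> E" for e
    using EL that setL by auto
  define Dset where "Dset = {dist u v | u v. u \<in> P \<and> v \<in> P \<and> u \<noteq> v}"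
  define Fset where "Fset = {dist u v | u v. u \<in> P \<and> v \<in> P}"
  have finD: "finite Dset"
  proof -
    have "Dset \<subseteq> (\<lambda>(u, v). dist u v) ` (P \<times> P)" unfolding Dset_def by auto
    then show ?thesis using finP by (meson finite_SigmaI finite_imageI finite_subset)
  qed
  have finF: "finite Fset"
  proof -
    have "Fset \<subseteq> (\<lambda>(u, v). dist u v) ` (P \<times> P)" unfolding Fset_def by auto
    then show ?thesis using finP by (meson finite_SigmaI finite_imageI finite_subset)
  qed
  obtain u v where uv: "u \<in> P" "v \<in> P" "u \<noteq> v"
    using c2 card_le_Suc0_iff_eq[OF finP] by fastforce
  have neD: "Dset \<noteq> {}" unfolding Dset_def using uv by auto
  define dmin where "dmin = Min Dset"
  define D where "D = Max Fset"
  have alpha: "aspect_ratio P = D / dmin" unfolding aspect_ratio_def D_def dmin_def Dset_def Fset_def by simp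
  have dpos: "dmin > 0"
  proof -
    have "dmin \<in> Dset" unfolding dmin_def using Min_in[OF finD neD] .
    then show ?thesis unfolding Dset_def by auto
  qed
  have lmin: "dmin \<le> dist (fst e) (snd e)" if "e \<in> E" for e
    unfolding dmin_def using EP[OF that] by (intro Min_le finD) (auto simp: Dset_def)
  have lmax: "dist (fst e) (snd e) \<le> D" if "e \<in> E" for e
    unfolding D_def using EP[OF that] by (intro Max_ge finF) (auto simp: Fset_def)
  define kk where "kk = (\<lambda>e::'a\<times>'a. nat \<lfloor>log 2 (dist (fst e) (snd e) / dmin)\<rfloor>)"
  define Kt where "Kt = nat \<lfloor>log 2 (D / dmin)\<rfloor>"
  have scl: "dmin * 2 ^ kk e \<le> dist (fst e) (snd e) \<and> dist (fst e) (snd e) < dmin * 2 ^ (kk e + 1)"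
    if "e \<in> E" for e
  proof -
    have y1: "dist (fst e) (snd e) / dmin \<ge> 1" using lmin[OF that] dpos by simp
    from scale_props[OF y1] show ?thesis unfolding kk_def using dpos
      by (simp add: pos_le_divide_eq pos_divide_less_eq mult.commute)
  qed
  have kkK: "kk e \<le> Kt" if "e \<in> E" for e
  proof -
    have y1: "dist (fst e) (snd e) / dmin \<ge> 1" using lmin[OF that] dpos by simp
    have "dist (fst e) (snd e) / dmin \<le> D / dmin" using lmax[OF that] dpos by (simp add: divide_right_mono)
    then have "log 2 (dist (fst e) (snd e) / dmin) \<le> log 2 (D / dmin)" using y1 by simp
    then show ?thesis unfolding kk_def Kt_def by (intro nat_mono floor_mono)
  qed
  define d where "d = real DIM('a)"
  have d1: "d \<ge> 1" unfolding d_def by simp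
  define K0 where "K0 = ((4 * d + 2) * (22 * d)) ^ DIM('a)"
  have K0pos: "K0 \<ge> 0" unfolding K0_def using d1 by simp
  have pow: "((4*d+2) * (2*(4 * s + 6)*d+2)) ^ DIM('a) \<le> K0 * s ^ DIM('a)"
  proof -
    have "((4*d+2) * (2*(4 * s + 6)*d+2)) ^ DIM('a) \<le> (((4*d+2)*(22*d)) * s) ^ DIM('a)"
      by (rule power_mono[OF const_bound[OF s1 d1]]) (use d1 s1 in simp)
    also have "\<dots> = K0 * s ^ DIM('a)" unfolding K0_def by (simp add: power_mult_distrib)
    finally show ?thesis .
  qed
  have geo: "rad s (fst e) (snd e) \<ge> dmin * 2 ^ k / (2 * s + 2) \<and> rad s (fst e) (snd e) \<le> 2 * (dmin * 2 ^ k / (2 * s + 2))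
      \<and> dist (fst e) (snd e) + 2 * (dmin * 2 ^ k / (2 * s + 2)) \<le> (4 * s + 6) * (dmin * 2 ^ k / (2 * s + 2))"
    if "e \<in> E" "kk e = k" for e k
  proof -
    define T where "T = dmin * 2 ^ k"
    define w where "w = 2 * s + 2"
    have w: "w > 0" unfolding w_def using s1 by simp
    have l1: "T \<le> dist (fst e) (snd e)" and l2: "dist (fst e) (snd e) < 2 * T"
      using scl[OF that(1)] that(2) unfolding T_def by auto
    have r: "rad s (fst e) (snd e) = dist (fst e) (snd e) / w" unfolding rad_def w_def by simp
    have a: "T / w \<le> dist (fst e) (snd e) / w" using l1 w by (simp add: divide_right_mono)
    have b: "dist (fst e) (snd e) / w \<le> 2 * (T / w)" using l2 w by (simp add: divide_right_mono)
    have c: "(4 * s + 6) * (T / w) = 2 * T + 2 * (T / w)" unfolding w_def using s1 by (simp add: field_simps)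
    show ?thesis using a b c l2 r unfolding T_def[symmetric] w_def[symmetric] by simp
  qed
  have sepE: "e1 = e2" if "e1 \<in> E" "e2 \<in> E" "kk e1 = k" "kk e2 = k"
      "dist (fst e1) (fst e2) < dmin * 2 ^ k / (2 * s + 2)" "dist (snd e1) (snd e2) < dmin * 2 ^ k / (2 * s + 2)" for e1 e2 k
  proof (rule ccontr)
    assume ne: "e1 \<noteq> e2"
    have "covers s e1 e2" unfolding covers_def using geo[OF that(1,3)] that(5,6)
      by (simp add: dist_commute)
    moreover have "covers s e2 e1" unfolding covers_def using geo[OF that(2,4)] that(5,6)
      by simp
    ultimately show False using mut[OF that(1,2) ne] by blast
  qed
  have dk: "dmin * 2 ^ k / (2 * s + 2) > 0" for k :: nat using dpos s1 by simp
  have claim1: "real (card {e\<in>E. kk e = k \<and> dist (fst e) x \<le> rad s (fst e) (snd e)}) \<le> K0 * s ^ DIM('a)" for x k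
  proof -
    have "real (card {e\<in>E. kk e = k \<and> dist (fst e) x \<le> rad s (fst e) (snd e)})
        \<le> ((2 * 2 * d + 2) * (2 * (4 * s + 6) * d + 2)) ^ DIM('a)"
      unfolding d_def
    proof (rule grid_count[OF _ dk[of k]])
      show "finite {e\<in>E. kk e = k \<and> dist (fst e) x \<le> rad s (fst e) (snd e)}" using finE by simp
      show "0 \<le> (2::real)" by simp
      show "0 \<le> 4 * s + 6" using s1 by simp
      show "e1 = e2" if "e1 \<in> {e\<in>E. kk e = k \<and> dist (fst e) x \<le> rad s (fst e) (snd e)}"
        "e2 \<in> {e\<in>E. kk e = k \<and> dist (fst e) x \<le> rad s (fst e) (snd e)}"
        "dist (fst e1) (fst e2) < dmin * 2 ^ k / (2 * s + 2)" "dist (snd e1) (snd e2) < dmin * 2 ^ k / (2 * s + 2)"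
        for e1 e2 using that sepE by auto
      show "dist (fst e) x \<le> 2 * (dmin * 2 ^ k / (2 * s + 2)) \<and> dist (snd e) x \<le> (4 * s + 6) * (dmin * 2 ^ k / (2 * s + 2))"
        if "e \<in> {e\<in>E. kk e = k \<and> dist (fst e) x \<le> rad s (fst e) (snd e)}" for e
      proof -
        have e: "e \<in> E" "kk e = k" "dist (fst e) x \<le> rad s (fst e) (snd e)" using that by auto
        have "dist (snd e) x \<le> dist (snd e) (fst e) + dist (fst e) x" by (rule dist_triangle)
        then show ?thesis using geo[OF e(1,2)] e(3) by (simp add: dist_commute)
      qed
    qed
    also have "\<dots> \<le> K0 * s ^ DIM('a)" using pow by simp
    finally show ?thesis .
  qed
  have claim2: "real (card {e\<in>E. kk e = k \<and> dist (snd e) x \<le> rad s (fst e) (snd e)}) \<le> K0 * s ^ DIM('a)" for x k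
  proof -
    have "real (card {e\<in>E. kk e = k \<and> dist (snd e) x \<le> rad s (fst e) (snd e)})
        \<le> ((2 * (4 * s + 6) * d + 2) * (2 * 2 * d + 2)) ^ DIM('a)"
      unfolding d_def
    proof (rule grid_count[OF _ dk[of k]])
      show "finite {e\<in>E. kk e = k \<and> dist (snd e) x \<le> rad s (fst e) (snd e)}" using finE by simp
      show "0 \<le> (2::real)" by simp
      show "0 \<le> 4 * s + 6" using s1 by simp
      show "e1 = e2" if "e1 \<in> {e\<in>E. kk e = k \<and> dist (snd e) x \<le> rad s (fst e) (snd e)}"
        "e2 \<in> {e\<in>E. kk e = k \<and> dist (snd e) x \<le> rad s (fst e) (snd e)}"
        "dist (fst e1) (fst e2) < dmin * 2 ^ k / (2 * s + 2)" "dist (snd e1) (snd e2) < dmin * 2 ^ k / (2 * s + 2)"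
        for e1 e2 using that sepE by auto
      show "dist (fst e) x \<le> (4 * s + 6) * (dmin * 2 ^ k / (2 * s + 2)) \<and> dist (snd e) x \<le> 2 * (dmin * 2 ^ k / (2 * s + 2))"
        if "e \<in> {e\<in>E. kk e = k \<and> dist (snd e) x \<le> rad s (fst e) (snd e)}" for e
      proof -
        have e: "e \<in> E" "kk e = k" "dist (snd e) x \<le> rad s (fst e) (snd e)" using that by auto
        have "dist (fst e) x \<le> dist (fst e) (snd e) + dist (snd e) x" by (rule dist_triangle)
        then show ?thesis using geo[OF e(1,2)] e(3) by simp
      qed
    qed
    also have "\<dots> \<le> K0 * s ^ DIM('a)" using pow by (simp add: mult.commute)
    finally show ?thesis .
  qed
  have Ktb: "real Kt + 1 \<le> 2 * max 1 (log 2 (aspect_ratio P))"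
  proof -
    have "real Kt \<le> max 0 (log 2 (D / dmin))" unfolding Kt_def by linarith
    then show ?thesis unfolding alpha by linarith
  qed
  have per_x: "real (card {e\<in>E. Q e}) \<le> (real Kt + 1) * (K0 * s ^ DIM('a))"
    if Qb: "\<And>k. real (card {e\<in>E. kk e = k \<and> Q e}) \<le> K0 * s ^ DIM('a)" for Q
  proof -
    have sub: "{e\<in>E. Q e} \<subseteq> (\<Union>k\<in>{..Kt}. {e\<in>E. kk e = k \<and> Q e})"
    proof
      fix e assume "e \<in> {e\<in>E. Q e}"
      then have "e \<in> E" "Q e" by auto
      then show "e \<in> (\<Union>k\<in>{..Kt}. {e\<in>E. kk e = k \<and> Q e})"
        using kkK[of e] by (intro UN_I[of "kk e"]) auto
    qed
    have finU: "finite (\<Union>k\<in>{..Kt}. {e\<in>E. kk e = k \<and> Q e})"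
      by (rule finite_subset[OF _ finE]) blast
    have "card {e\<in>E. Q e} \<le> card (\<Union>k\<in>{..Kt}. {e\<in>E. kk e = k \<and> Q e})"
      by (rule card_mono[OF finU sub])
    also have "\<dots> \<le> (\<Sum>k\<in>{..Kt}. card {e\<in>E. kk e = k \<and> Q e})" by (rule card_UN_le) (rule finite_atMost)
    finally have "real (card {e\<in>E. Q e}) \<le> real (\<Sum>k\<in>{..Kt}. card {e\<in>E. kk e = k \<and> Q e})"
      by (simp only: of_nat_le_iff)
    also have "\<dots> = (\<Sum>k\<in>{..Kt}. real (card {e\<in>E. kk e = k \<and> Q e}))" by (rule of_nat_sum)
    also have "\<dots> \<le> (\<Sum>k\<in>{..Kt}. K0 * s ^ DIM('a))" by (rule sum_mono) (rule Qb)
    also have "\<dots> = (real Kt + 1) * (K0 * s ^ DIM('a))" by simp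
    finally show ?thesis .
  qed
  have side: "real (\<Sum>e\<in>E. card {x\<in>P. R e x}) \<le> real (card P) * ((real Kt + 1) * (K0 * s ^ DIM('a)))"
    if Rb: "\<And>x k. real (card {e\<in>E. kk e = k \<and> R e x}) \<le> K0 * s ^ DIM('a)" for R
  proof -
    have "real (\<Sum>e\<in>E. card {x\<in>P. R e x}) = (\<Sum>x\<in>P. real (card {e\<in>E. R e x}))"
      unfolding count_swap[OF finE finP, of R] by (rule of_nat_sum)
    also have "\<dots> \<le> (\<Sum>x\<in>P. (real Kt + 1) * (K0 * s ^ DIM('a)))"
      by (rule sum_mono) (rule per_x, rule Rb)
    also have "\<dots> = real (card P) * ((real Kt + 1) * (K0 * s ^ DIM('a)))" by simp
    finally show ?thesis .
  qed
  have ws: "wspd_size P s E = (\<Sum>e\<in>E. card {x\<in>P. dist (fst e) x \<le> rad s (fst e) (snd e)})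
       + (\<Sum>e\<in>E. card {x\<in>P. dist (snd e) x \<le> rad s (fst e) (snd e)})"
    unfolding wspd_size_def ballP_def by (rule sum.distrib)
  have "real (wspd_size P s E) \<le> 2 * (real (card P) * ((real Kt + 1) * (K0 * s ^ DIM('a))))"
    using side[of "\<lambda>e x. dist (fst e) x \<le> rad s (fst e) (snd e)", OF claim1]
      side[of "\<lambda>e x. dist (snd e) x \<le> rad s (fst e) (snd e)", OF claim2]
    unfolding ws by simp
  also have "\<dots> = 2 * (real Kt + 1) * (K0 * real (card P) * s ^ DIM('a))" by (simp add: algebra_simps)
  also have "\<dots> \<le> 2 * (2 * max 1 (log 2 (aspect_ratio P))) * (K0 * real (card P) * s ^ DIM('a))"
    by (intro mult_right_mono mult_left_mono Ktb) (use K0pos s1 in auto)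
  also have "\<dots> = 4 * K0 * real (card P) * s ^ DIM('a) * max 1 (log 2 (aspect_ratio P))"
    by (simp add: algebra_simps)
  finally show ?thesis unfolding E_def K0_def d_def .
qed


theorem theorem15:
  "\<exists>C>0. \<forall>(P::'a::euclidean_space set) (s::real) (L::('a \<times> 'a) list).
      finite P \<and> card P \<ge> 2 \<and> s > 1 \<and> distinct L \<and>
      set L = {(p, q). p \<in> P \<and> q \<in> P \<and> p \<noteq> q} \<longrightarrow>
        real (wspd_size P s (uc_edges P s L))
          \<le> C * real (card P) * s ^ DIM('a) * max 1 (log 2 (aspect_ratio P)) \<and>
        real (uc_messages P s L)
          \<le> C * real (card P) * s ^ DIM('a) * max 1 (log 2 (aspect_ratio P))"
proof (rule exI[of _ "4 * ((4 * real DIM('a) + 2) * (22 * real DIM('a))) ^ DIM('a)"], rule conjI)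
  show "0 < 4 * ((4 * real DIM('a) + 2) * (22 * real DIM('a))) ^ DIM('a)" by simp
  show "\<forall>(P::'a::euclidean_space set) (s::real) (L::('a \<times> 'a) list).
      finite P \<and> card P \<ge> 2 \<and> s > 1 \<and> distinct L \<and>
      set L = {(p, q). p \<in> P \<and> q \<in> P \<and> p \<noteq> q} \<longrightarrow>
        real (wspd_size P s (uc_edges P s L))
          \<le> 4 * ((4 * real DIM('a) + 2) * (22 * real DIM('a))) ^ DIM('a) * real (card P) * s ^ DIM('a) * max 1 (log 2 (aspect_ratio P)) \<and>
        real (uc_messages P s L)
          \<le> 4 * ((4 * real DIM('a) + 2) * (22 * real DIM('a))) ^ DIM('a) * real (card P) * s ^ DIM('a) * max 1 (log 2 (aspect_ratio P))"
  proof (intro allI impI)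
    fix P :: "'a set" and s :: real and L :: "('a \<times> 'a) list"
    assume H: "finite P \<and> card P \<ge> 2 \<and> s > 1 \<and> distinct L \<and>
      set L = {(p, q). p \<in> P \<and> q \<in> P \<and> p \<noteq> q}"
    have m: "real (wspd_size P s (uc_edges P s L))
          \<le> 4 * ((4 * real DIM('a) + 2) * (22 * real DIM('a))) ^ DIM('a) * real (card P) * s ^ DIM('a) * max 1 (log 2 (aspect_ratio P))"
      using H by (intro main_bound) auto
    have e: "uc_messages P s L = wspd_size P s (uc_edges P s L)" using H by (intro messages_eq) auto
    show "real (wspd_size P s (uc_edges P s L))
          \<le> 4 * ((4 * real DIM('a) + 2) * (22 * real DIM('a))) ^ DIM('a) * real (card P) * s ^ DIM('a) * max 1 (log 2 (aspect_ratio P)) \<and>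
        real (uc_messages P s L)
          \<le> 4 * ((4 * real DIM('a) + 2) * (22 * real DIM('a))) ^ DIM('a) * real (card P) * s ^ DIM('a) * max 1 (log 2 (aspect_ratio P))"
      using m e by simp
  qed
qed

end
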